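(* $C_{U(25)^2}(25)\le 9$; that is, every sequence of length $9$ in $\mathbb Z_{25}$ has a $U(25)^2$-weighted zero-sum subsequence consisting of consecutive terms.
   Context: $\mathbb Z_{25}=\mathbb Z/25\mathbb Z$, $U(25)$ its group of units, $U(25)^2=\{x^2:x\in U(25)\}$. For $A\subseteq\mathbb Z_m$, a sequence $(y_1,\dots,y_t)$ ($t\ge1$) is an $A$-weighted zero-sum sequence if there exist $a_i\in A$ with $\sum a_iy_i=0$. $C_A(m)$ is the least positive integer $t$ such that every sequence of length $t$ in $\mathbb Z_m$ has a nonempty subsequence of consecutive terms that is an $A$-weighted zero-sum sequence. *)

theory Defs
  imports Main
begin

text \<open>Z_m is represented by the residues {0..<m} :: int set; arithmetic is taken mod m.\<close>

definition Zmod :: "int \<Rightarrow> int set" where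
  "Zmod m = {0..<m}"

definition units_mod :: "int \<Rightarrow> int set" where
  "units_mod m = {x \<in> Zmod m. \<exists>y \<in> Zmod m. (x * y) mod m = 1 mod m}"

definition unit_squares_mod :: "int \<Rightarrow> int set" where
  "unit_squares_mod m = {(x * x) mod m | x. x \<in> units_mod m}"

definition weighted_zero_sum :: "int \<Rightarrow> int set \<Rightarrow> int list \<Rightarrow> bool" where
  "weighted_zero_sum m A ys \<longleftrightarrow> ys \<noteq> [] \<and>
     (\<exists>as. length as = length ys \<and> set as \<subseteq> A \<and>
        (\<Sum>i<length ys. as ! i * ys ! i) mod m = 0)"

definition has_consecutive_wzs :: "int \<Rightarrow> int set \<Rightarrow> int list \<Rightarrow> bool" where
  "has_consecutive_wzs m A xs \<longleftrightarrow>
     (\<exists>i j. i < j \<and> j \<le> length xs \<and> weighted_zero_sum m A (take (j - i) (drop i xs)))"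

definition C_const :: "int set \<Rightarrow> int \<Rightarrow> nat" where
  "C_const A m = (LEAST t. t > 0 \<and>
     (\<forall>xs. length xs = t \<and> set xs \<subseteq> Zmod m \<longrightarrow> has_consecutive_wzs m A xs))"

end

theory Submission
  imports Defs
begin

definition Qs :: "int list" where "Qs = [1,4,6,9,11,14,16,19,21,24]"

definition invl :: "int list" where
  "invl = [0,1,13,17,19,0,21,18,22,14,0,16,23,2,9,0,11,3,7,4,0,6,8,12,24]"

definition cset :: "nat \<Rightarrow> int set" where
  "cset c = (if c = 1 then {z. 0 \<le> z \<and> z < 25 \<and> (z mod 5 = 1 \<or> z mod 5 = 4)}
             else if c = 2 then {z. 0 \<le> z \<and> z < 25 \<and> (z mod 5 = 2 \<or> z mod 5 = 3)}
             else if c = 3 then {5,20} else if c = 4 then {10,15} else {})"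

definition pers :: "nat \<Rightarrow> nat \<Rightarrow> bool" where
  "pers x t \<longleftrightarrow> (x \<le> 2 \<and> x \<noteq> t) \<or> (x \<ge> 3 \<and> t \<ge> 3 \<and> x \<noteq> t)"

definition nx :: "nat set \<Rightarrow> nat \<Rightarrow> nat set" where
  "nx K t = insert t {x\<in>K. pers x t}"

definition mm :: "nat set \<Rightarrow> nat" where
  "mm K = (if 1 \<in> K then 0 else 3) + (if 2 \<in> K then 0 else 3)
        + (if 3 \<in> K then 0 else 1) + (if 4 \<in> K then 0 else 1)"

lemma mm_dec: "t \<in> {1,2,3,4} \<Longrightarrow> t \<notin> K \<Longrightarrow> mm (nx K t) + 1 \<le> mm K"
  unfolding mm_def nx_def pers_def by auto

lemma Qmem_all: "\<forall>a\<in>set [0..24::int]. (a mod 5 = 1 \<or> a mod 5 = 4) \<longrightarrow> a \<in> set Qs"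
  by (simp add: upto.simps Qs_def)

lemma Qmem: "0 \<le> a \<Longrightarrow> a < 25 \<Longrightarrow> a mod 5 = 1 \<or> a mod 5 = 4 \<Longrightarrow> a \<in> set Qs"
  using Qmem_all by (auto simp: set_upto)

lemma inv_all: "\<forall>y\<in>set [0..24::int]. y mod 5 \<noteq> 0 \<longrightarrow>
   (y * (invl ! nat y)) mod 25 = 1 \<and> 0 \<le> invl ! nat y \<and> invl ! nat y < 25"
  by (simp add: upto.simps invl_def)

lemma inv_ex: "0 \<le> (y::int) \<Longrightarrow> y < 25 \<Longrightarrow> y mod 5 \<noteq> 0 \<Longrightarrow> \<exists>yi. (y * yi) mod 25 = 1"
proof -
  assume a: "0 \<le> (y::int)" "y < 25" "y mod 5 \<noteq> 0"
  then have "y \<in> set [0..24]" by (simp add: set_upto)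
  then show ?thesis using inv_all a by blast
qed

definition W :: "int list \<Rightarrow> int set" where
  "W p = {(\<Sum>k<length p - i. as!k * (drop i p)!k) mod 25 | i as.
            i < length p \<and> length as = length p - i \<and> set as \<subseteq> set Qs}"

lemma sq_mem: "x \<in> {0..<25} \<Longrightarrow> y \<in> {0..<25} \<Longrightarrow> (x*y) mod 25 = 1 \<Longrightarrow>
   (x*x) mod 25 \<in> unit_squares_mod 25"
proof -
  assume a: "x \<in> {0..<25}" "y \<in> {0..<25}" "(x*y) mod 25 = 1"
  then have "x \<in> units_mod 25" unfolding units_mod_def Zmod_def by auto
  then show ?thesis unfolding unit_squares_mod_def by blast
qed

lemma Q_sub: "set Qs \<subseteq> unit_squares_mod 25"
proof -
  have "(1*1) mod 25 \<in> unit_squares_mod 25" by (rule sq_mem[of 1 1]) auto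
  moreover have "(2*2) mod 25 \<in> unit_squares_mod 25" by (rule sq_mem[of 2 13]) auto
  moreover have "(3*3) mod 25 \<in> unit_squares_mod 25" by (rule sq_mem[of 3 17]) auto
  moreover have "(4*4) mod 25 \<in> unit_squares_mod 25" by (rule sq_mem[of 4 19]) auto
  moreover have "(6*6) mod 25 \<in> unit_squares_mod 25" by (rule sq_mem[of 6 21]) auto
  moreover have "(7*7) mod 25 \<in> unit_squares_mod 25" by (rule sq_mem[of 7 18]) auto
  moreover have "(8*8) mod 25 \<in> unit_squares_mod 25" by (rule sq_mem[of 8 22]) auto
  moreover have "(9*9) mod 25 \<in> unit_squares_mod 25" by (rule sq_mem[of 9 14]) auto
  moreover have "(11*11) mod 25 \<in> unit_squares_mod 25" by (rule sq_mem[of 11 16]) auto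
  moreover have "(12*12) mod 25 \<in> unit_squares_mod 25" by (rule sq_mem[of 12 23]) auto
  ultimately show ?thesis unfolding Qs_def by simp
qed

lemma W_zero:
  assumes "0 \<in> W (take j xs)" "j \<le> length xs" "set Qs \<subseteq> A"
  shows "has_consecutive_wzs 25 A xs"
proof -
  let ?p = "take j xs"
  from assms(1) obtain i as where i: "i < length ?p" "length as = length ?p - i" "set as \<subseteq> set Qs"
    and s0: "0 = (\<Sum>k<length ?p - i. as!k * (drop i ?p)!k) mod 25"
    unfolding W_def by blast
  note s = s0[symmetric]
  have lp: "length ?p = j" using assms(2) by simp
  have eq: "drop i ?p = take (j - i) (drop i xs)" by (simp add: drop_take)
  have len: "length (take (j - i) (drop i xs)) = j - i" using assms(2) i lp by simp
  have "weighted_zero_sum 25 A (take (j - i) (drop i xs))"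
    unfolding weighted_zero_sum_def
  proof (intro conjI exI)
    show "take (j - i) (drop i xs) \<noteq> []" using len i lp by auto
    show "length as = length (take (j - i) (drop i xs))" using len i lp by simp
    show "set as \<subseteq> A" using i assms(3) by blast
    show "(\<Sum>k<length (take (j - i) (drop i xs)). as ! k * take (j - i) (drop i xs) ! k) mod 25 = 0"
      using s eq len lp by simp
  qed
  then show ?thesis unfolding has_consecutive_wzs_def using i lp assms(2) by auto
qed

lemma W_single: "a \<in> set Qs \<Longrightarrow> (a*y) mod 25 \<in> W (p@[y])"
  unfolding W_def
  apply (rule CollectI)
  apply (rule exI[of _ "length p"], rule exI[of _ "[a]"])
  by simp

lemma W_snoc:
  assumes "s \<in> W p" "a \<in> set Qs"
  shows "(s + a*y) mod 25 \<in> W (p@[y])"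
proof -
  from assms(1) obtain i as where i: "i < length p" "length as = length p - i" "set as \<subseteq> set Qs"
    and s: "s = (\<Sum>k<length p - i. as!k * (drop i p)!k) mod 25"
    unfolding W_def by blast
  let ?n = "length p - i"
  have dr: "drop i (p@[y]) = drop i p @ [y]" using i by simp
  have ln: "length (p@[y]) - i = Suc ?n" using i by simp
  have "(\<Sum>k<Suc ?n. (as@[a])!k * (drop i p @ [y])!k)
        = (\<Sum>k<?n. as!k * (drop i p)!k) + a*y"
    using i by (simp add: nth_append)
  then have "(s + a*y) mod 25 = (\<Sum>k<length (p@[y]) - i. (as@[a])!k * (drop i (p@[y]))!k) mod 25"
    using s dr ln by (simp add: mod_add_left_eq)
  moreover have "i < length (p@[y])" "length (as@[a]) = length (p@[y]) - i"
      "set (as@[a]) \<subseteq> set Qs" using i assms(2) by auto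
  ultimately show ?thesis unfolding W_def by blast
qed

lemma cset_range: "z \<in> cset c \<Longrightarrow> 0 \<le> z \<and> z < 25"
  unfolding cset_def by (auto split: if_splits)

lemma cls_ex: "0 \<le> y \<Longrightarrow> y < 25 \<Longrightarrow> y \<noteq> 0 \<Longrightarrow> \<exists>t\<in>{1,2,3,4}. y \<in> cset t"
proof -
  assume a: "0 \<le> y" "y < 25" "y \<noteq> 0"
  have "y mod 5 = 1 \<or> y mod 5 = 4 \<or> y mod 5 = 2 \<or> y mod 5 = 3 \<or> y = 5 \<or> y = 20 \<or> y = 10 \<or> y = 15"
    using a by presburger
  then show ?thesis using a unfolding cset_def by auto
qed

lemma mod25_5: "((w::int) mod 25) mod 5 = w mod 5"
  by (simp add: mod_mod_cancel)

lemma in1: "z \<in> cset 1 \<longleftrightarrow> 0 \<le> z \<and> z < 25 \<and> (z mod 5 = 1 \<or> z mod 5 = 4)"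
  unfolding cset_def by simp
lemma in2: "z \<in> cset 2 \<longleftrightarrow> 0 \<le> z \<and> z < 25 \<and> (z mod 5 = 2 \<or> z mod 5 = 3)"
  unfolding cset_def by simp
lemma in3: "z \<in> cset 3 \<longleftrightarrow> z = 5 \<or> z = 20"
  unfolding cset_def by simp
lemma in4: "z \<in> cset 4 \<longleftrightarrow> z = 10 \<or> z = 15"
  unfolding cset_def by simp

lemma one_Q: "1 \<in> set Qs" and m1_Q: "24 \<in> set Qs" unfolding Qs_def by simp_all

lemma res_eq1: "((z::int) - y) mod 5 = (z mod 5 - y mod 5) mod 5"
  by (simp add: mod_diff_eq)

lemma res_eq2: "((z::int) - 24*y) mod 5 = (z mod 5 + y mod 5) mod 5"
proof -
  have "z - 24*y = (z + y) + 5 * (-5*y)" by simp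
  then have "(z - 24*y) mod 5 = (z + y) mod 5" by (metis mod_mult_self2 mult.commute)
  then show ?thesis by (simp add: mod_add_eq)
qed

lemma pers_unit:
  assumes "c \<in> {1,2}" "z \<in> cset c" "y mod 5 = 0 \<or> (c = 1 \<and> (y mod 5 = 2 \<or> y mod 5 = 3))
            \<or> (c = 2 \<and> (y mod 5 = 1 \<or> y mod 5 = 4))"
  shows "\<exists>a\<in>set Qs. (z - a*y) mod 25 \<in> cset c"
proof -
  have r1: "0 \<le> (z - y) mod 25" "(z - y) mod 25 < 25" "((z - y) mod 25) mod 5 = (z - y) mod 5"
    by (simp_all add: mod25_5)
  have r2: "0 \<le> (z - 24*y) mod 25" "(z - 24*y) mod 25 < 25" "((z - 24*y) mod 25) mod 5 = (z - 24*y) mod 5"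
    by (simp_all add: mod25_5)
  show ?thesis
  proof (cases "c = 1")
    case True
    then have z: "z mod 5 = 1 \<or> z mod 5 = 4" using assms(2) in1 by auto
    have "((z - y) mod 5 = 1 \<or> (z - y) mod 5 = 4) \<or> ((z - 24*y) mod 5 = 1 \<or> (z - 24*y) mod 5 = 4)"
      using z assms(3) True unfolding res_eq1[of z y] res_eq2[of z y] by (elim disjE conjE) simp_all
    then show ?thesis
    proof
      assume h: "(z - y) mod 5 = 1 \<or> (z - y) mod 5 = 4"
      have "(z - 1*y) mod 25 \<in> cset 1" unfolding in1 using h r1 by simp
      then show ?thesis using one_Q True by blast
    next
      assume h: "(z - 24*y) mod 5 = 1 \<or> (z - 24*y) mod 5 = 4"
      have "(z - 24*y) mod 25 \<in> cset 1" unfolding in1 using h r2 by simp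
      then show ?thesis using m1_Q True by blast
    qed
  next
    case False
    then have c2: "c = 2" using assms(1) by auto
    then have z: "z mod 5 = 2 \<or> z mod 5 = 3" using assms(2) in2 by auto
    have "((z - y) mod 5 = 2 \<or> (z - y) mod 5 = 3) \<or> ((z - 24*y) mod 5 = 2 \<or> (z - 24*y) mod 5 = 3)"
      using z assms(3) c2 unfolding res_eq1[of z y] res_eq2[of z y] by (elim disjE conjE) simp_all
    then show ?thesis
    proof
      assume h: "(z - y) mod 5 = 2 \<or> (z - y) mod 5 = 3"
      have "(z - 1*y) mod 25 \<in> cset 2" unfolding in2 using h r1 by simp
      then show ?thesis using one_Q c2 by blast
    next
      assume h: "(z - 24*y) mod 5 = 2 \<or> (z - 24*y) mod 5 = 3"
      have "(z - 24*y) mod 25 \<in> cset 2" unfolding in2 using h r2 by simp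
      then show ?thesis using m1_Q c2 by blast
    qed
  qed
qed

lemma pers_fact:
  assumes "x \<in> {1,2,3,4}" "t \<in> {1,2,3,4}" "pers x t" "y \<in> cset t" "z \<in> cset x"
  shows "\<exists>a\<in>set Qs. (z - a*y) mod 25 \<in> cset x"
proof -
  have ymod: "t = 1 \<Longrightarrow> y mod 5 = 1 \<or> y mod 5 = 4" "t = 2 \<Longrightarrow> y mod 5 = 2 \<or> y mod 5 = 3"
    "t = 3 \<Longrightarrow> y mod 5 = 0" "t = 4 \<Longrightarrow> y mod 5 = 0"
    using assms(4) in1 in2 in3 in4 by auto
  consider "x = 1" | "x = 2" | "x = 3" | "x = 4" using assms(1) by auto
  then show ?thesis
  proof cases
    case 1
    then show ?thesis using assms(2,3,5) ymod by (intro pers_unit) (auto simp: pers_def)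
  next
    case 2
    then show ?thesis using assms(2,3,5) ymod by (intro pers_unit) (auto simp: pers_def)
  next
    case 3
    then have "t = 4" using assms(2,3) by (auto simp: pers_def)
    then have "y = 10 \<or> y = 15" "z = 5 \<or> z = 20" using 3 assms(4,5) in3 in4 by auto
    then show ?thesis using 3 by (auto simp: in3 Qs_def)
  next
    case 4
    then have "t = 3" using assms(2,3) by (auto simp: pers_def)
    then have "y = 5 \<or> y = 20" "z = 10 \<or> z = 15" using 4 assms(4,5) in3 in4 by auto
    then show ?thesis using 4 by (auto simp: in4 Qs_def)
  qed
qed

lemma mod5_cases: "(w::int) mod 5 = 0 \<or> w mod 5 = 1 \<or> w mod 5 = 2 \<or> w mod 5 = 3 \<or> w mod 5 = 4"
  by presburger

lemma orbit_fact:
  assumes "t \<in> {1,2,3,4}" "y \<in> cset t" "z \<in> cset t"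
  shows "\<exists>a\<in>set Qs. z = a*y mod 25"
proof -
  consider "t = 1 \<or> t = 2" | "t = 3" | "t = 4" using assms(1) by auto
  then show ?thesis
  proof cases
    case 1
    have yr: "0 \<le> y" "y < 25" "0 \<le> z" "z < 25" using assms cset_range by auto
    have ycl: "(y mod 5 = 1 \<or> y mod 5 = 4) \<and> (z mod 5 = 1 \<or> z mod 5 = 4) \<or>
               (y mod 5 = 2 \<or> y mod 5 = 3) \<and> (z mod 5 = 2 \<or> z mod 5 = 3)"
      using 1 assms(2,3) in1 in2 by auto
    then have "y mod 5 \<noteq> 0" by auto
    then obtain yi where yi: "(y * yi) mod 25 = 1" using inv_ex[OF yr(1,2)] by blast
    have "(y * yi) mod 5 = 1" using yi mod25_5[of "y*yi"] by simp
    then have e1: "((y mod 5) * (yi mod 5)) mod 5 = 1" by (simp add: mod_mult_eq)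
    have yb: "0 \<le> yi mod 5" "yi mod 5 < 5" by simp_all
    define a where "a = (z * yi) mod 25"
    have am: "a mod 5 = ((z mod 5) * (yi mod 5)) mod 5"
      unfolding a_def by (simp add: mod25_5 mod_mult_eq)
    have "a mod 5 = 1 \<or> a mod 5 = 4"
    proof -
      have "yi mod 5 = 0 \<or> yi mod 5 = 1 \<or> yi mod 5 = 2 \<or> yi mod 5 = 3 \<or> yi mod 5 = 4"
        by (rule mod5_cases)
      then show ?thesis using ycl e1 am by (elim disjE conjE) simp_all
    qed
    then have aQ: "a \<in> set Qs" using Qmem unfolding a_def by simp
    have "a * y mod 25 = ((z * yi) * y) mod 25" unfolding a_def
      by (simp add: mod_mult_left_eq)
    also have "\<dots> = (z * (y * yi)) mod 25" by (simp add: algebra_simps)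
    also have "\<dots> = (z * ((y * yi) mod 25)) mod 25" by (simp add: mod_mult_right_eq)
    also have "\<dots> = z" using yi yr by simp
    finally have "z = a * y mod 25" by simp
    then show ?thesis using aQ by blast
  next
    case 2
    then have "y = 5 \<or> y = 20" "z = 5 \<or> z = 20" using assms(2,3) in3 by auto
    then show ?thesis by (auto simp: Qs_def)
  next
    case 3
    then have "y = 10 \<or> y = 15" "z = 10 \<or> z = 15" using assms(2,3) in4 by auto
    then show ?thesis by (auto simp: Qs_def)
  qed
qed

lemma key:
  "set p \<subseteq> {0..<25} \<Longrightarrow> (\<exists>j. j \<le> length p \<and> 0 \<in> W (take j p)) \<or>
     (\<exists>K. K \<subseteq> {1,2,3,4} \<and> (\<forall>c\<in>K. cset c \<subseteq> W p) \<and> length p + mm K \<le> 8)"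
proof (induction p rule: rev_induct)
  case Nil
  show ?case by (intro disjI2 exI[of _ "{}"]) (simp add: mm_def)
next
  case (snoc y p)
  have yr: "0 \<le> y" "y < 25" using snoc.prems by auto
  from snoc.prems snoc.IH consider (A) "\<exists>j. j \<le> length p \<and> 0 \<in> W (take j p)"
    | (B) K where "K \<subseteq> {1,2,3,4}" "\<forall>c\<in>K. cset c \<subseteq> W p" "length p + mm K \<le> 8" by auto
  then show ?case
  proof cases
    case A
    then obtain j where "j \<le> length p" "0 \<in> W (take j p)" by blast
    then have H: "j \<le> length (p@[y])" "0 \<in> W (take j (p@[y]))" by (simp_all add: take_append)
    show ?thesis by (intro disjI1 exI[of _ j]) (simp only: H)
  next
    case B
    have full: "take (length (p@[y])) (p@[y]) = p@[y]" by simp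
    show ?thesis
    proof (cases "y = 0")
      case True
      have "(1*y) mod 25 \<in> W (p@[y])" by (rule W_single[OF one_Q])
      then have H: "0 \<in> W (take (length (p@[y])) (p@[y]))" using True full by simp
      show ?thesis by (intro disjI1 exI[of _ "length (p@[y])"] conjI order_refl H)
    next
      case False
      then obtain t where t: "t \<in> {1,2,3,4}" "y \<in> cset t" using cls_ex[OF yr False] by blast
      show ?thesis
      proof (cases "t \<in> K")
        case True
        then have "y \<in> W p" using B(2) t by blast
        then have "(y + 24*y) mod 25 \<in> W (p@[y])" by (rule W_snoc[OF _ m1_Q])
        then have H: "0 \<in> W (take (length (p@[y])) (p@[y]))" using full by simp
        show ?thesis by (intro disjI1 exI[of _ "length (p@[y])"] conjI order_refl H)
      next
        case False
        have inv: "\<forall>c\<in>nx K t. cset c \<subseteq> W (p@[y])"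
        proof
          fix c assume c: "c \<in> nx K t"
          show "cset c \<subseteq> W (p@[y])"
          proof
            fix z assume z: "z \<in> cset c"
            show "z \<in> W (p@[y])"
            proof (cases "c = t")
              case True
              then obtain a where "a \<in> set Qs" "z = a*y mod 25" using orbit_fact[OF t(1) t(2)] z True by blast
              then show ?thesis using W_single by metis
            next
              case False
              then have cK: "c \<in> K" "pers c t" using c unfolding nx_def by auto
              then have "c \<in> {1,2,3,4}" using B(1) by auto
              then obtain a where a: "a \<in> set Qs" "(z - a*y) mod 25 \<in> cset c"
                using pers_fact[OF _ t(1) cK(2) t(2) z] by blast
              then have "(z - a*y) mod 25 \<in> W p" using B(2) cK by blast
              then have "((z - a*y) mod 25 + a*y) mod 25 \<in> W (p@[y])" by (rule W_snoc[OF _ a(1)])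
              moreover have "((z - a*y) mod 25 + a*y) mod 25 = z"
                using cset_range[OF z] by (simp add: mod_add_left_eq)
              ultimately show ?thesis by simp
            qed
          qed
        qed
        have "nx K t \<subseteq> {1,2,3,4}" using B(1) t unfolding nx_def by auto
        moreover have "length (p@[y]) + mm (nx K t) \<le> 8" using mm_dec[OF t(1) False] B(3) by simp
        ultimately show ?thesis using inv by (intro disjI2 exI[of _ "nx K t"] conjI)
      qed
    qed
  qed
qed

theorem mainTheorem16:
  shows "C_const (unit_squares_mod 25) 25 \<le> 9"
proof -
  have P: "\<forall>xs. length xs = 9 \<and> set xs \<subseteq> Zmod 25 \<longrightarrow> has_consecutive_wzs 25 (unit_squares_mod 25) xs"
  proof (intro allI impI)
    fix xs :: "int list" assume a: "length xs = 9 \<and> set xs \<subseteq> Zmod 25"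
    then have "set xs \<subseteq> {0..<25}" by (simp add: Zmod_def)
    from key[OF this] a obtain j where j: "j \<le> length xs" "0 \<in> W (take j xs)" by auto
    show "has_consecutive_wzs 25 (unit_squares_mod 25) xs" by (rule W_zero[OF j(2) j(1) Q_sub])
  qed
  show ?thesis unfolding C_const_def by (rule Least_le) (use P in simp)
qed

end
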